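(* Let $\mathcal{T}$ be an MPQ-tree of an interval graph $G=(V,E)$, let $(x,y)\in E$ with $x$ over $y$ and $node(x)\neq node(y)$. If the $\langle x,y\rangle$-tree-path is not almost rotable, then $(x,y)$ is not an interval edge.
   Context: Graphs are finite and simple; for $G=(V,E)$ and $e\in E$, $G-e=(V,E\setminus\{e\})$. An edge $(x,y)\in E$ of an interval graph $G$ is an interval edge if $G-(x,y)$ is an interval graph. An MPQ-tree of an interval graph $G=(V,E)$, $V=\{1,\dots,n\}$, is a rooted plane tree whose nodes are P-nodes and Q-nodes. Each P-node carries a (possibly empty) set of vertices. A Q-node has $k\ge 3$ ordered positions $1,\dots,k$; position $i$ carries a set $S_i\subseteq V$ (the $i$-th section) and a child subtree $T_i$, which may be empty. Every vertex $v$ is assigned to exactly one node $node(v)$: either $v$ lies in the set of the P-node $node(v)$, or $node(v)$ is a Q-node and $v$ lies exactly in the sections $S_{l(v)},\dots,S_{r(v)}$ of it, with $l(v)<r(v)$. For a node with child subtrees $T_1,\dots,T_k$, $V_i$ denotes the set of vertices assigned to nodes of $T_i$ ($V_i=\emptyset$ if $T_i$ is empty). The maximal cliques of $G$ are in bijection with the descending paths from the root which at a P-node continue into one of its children (stopping if there is none) and at a Q-node choose a position $i$ and continue into $T_i$ (stopping if $T_i$ is empty); the clique is the union of the sets of the visited P-nodes and the chosen sections. Reading these cliques left to right gives a linear order of the maximal cliques, and the orders obtained this way after arbitrarily permuting children of P-nodes and reversing the positions of Q-nodes are exactly the orders of the maximal cliques of $G$ in which the cliques containing any fixed vertex are consecutive.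 Moreover, for every Q-node with sections $S_1,\dots,S_k$: (a) $V_1\neq\emptyset$ and $V_k\ne\emptyset$; (b) $S_1\subseteq S_2$ and $S_k\subseteq S_{k-1}$; (c) $S_{i-1}\cap S_i\neq\emptyset$ for $2\le i\le k$; (d) $S_{i-1}\neq S_i$ for $2\le i\le k$; (e) $(S_i\cap S_{i+1})\setminus S_1\neq\emptyset$ and $(S_{i-1}\cap S_i)\setminus S_k\neq\emptyset$ for $2\le i\le k-1$; (f) $(S_{i-1}\cup V_{i-1})\setminus S_i\neq\emptyset$ and $(S_i\cup V_i)\setminus S_{i-1}\neq\emptyset$ for $2\le i\le k$; and further (g) no empty P-node has an empty P-node as its parent, (h) no P-node has exactly one child whose root is a P-node, (i) every child subtree of a P-node is nonempty. We say $x$ is over $y$ if $node(x)$ is the lowest common ancestor of $node(x)$ and $node(y)$ in $\mathcal{T}$. For $x$ over $y$ with $node(x)\ne node(y)$, the $\langle x,y\rangle$-tree-path is the tree path $node(x)=n_1,n_2,\dots,n_t=node(y)$. For a Q-node with sections $S_1,\dots,S_k$, section $S_a$ is central if $1<a<k$. The path goes through a central section if for some $1<i<t$, $n_i$ is a Q-node and $n_{i+1}$ lies in the subtree $T_a$ of a central section $S_a$ of $n_i$. The path is almost rotable if it does not go through a central section and $n_t$ is a P-node that is a leaf of $\mathcal{T}$. *)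

theory Defs
  imports Complex_Main
begin

definition simple_graph :: "'a set \<Rightarrow> 'a set set \<Rightarrow> bool" where
  "simple_graph V E \<longleftrightarrow> finite V \<and> (\<forall>e\<in>E. e \<subseteq> V \<and> card e = 2)"

definition interval_graph :: "'a set \<Rightarrow> 'a set set \<Rightarrow> bool" where
  "interval_graph V E \<longleftrightarrow> simple_graph V E \<and>
     (\<exists>I :: 'a \<Rightarrow> real \<times> real.
        (\<forall>v\<in>V. fst (I v) \<le> snd (I v)) \<and>
        (\<forall>u\<in>V. \<forall>v\<in>V. u \<noteq> v \<longrightarrow>
            ({u, v} \<in> E \<longleftrightarrow> max (fst (I u)) (fst (I v)) \<le> min (snd (I u)) (snd (I v)))))"

definition interval_edge :: "'a set \<Rightarrow> 'a set set \<Rightarrow> 'a \<Rightarrow> 'a \<Rightarrow> bool" where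
  "interval_edge V E x y \<longleftrightarrow> interval_graph V E \<and> {x, y} \<in> E \<and> interval_graph V (E - {{x, y}})"

definition is_clique :: "'a set \<Rightarrow> 'a set set \<Rightarrow> 'a set \<Rightarrow> bool" where
  "is_clique V E C \<longleftrightarrow> C \<subseteq> V \<and> (\<forall>u\<in>C. \<forall>v\<in>C. u \<noteq> v \<longrightarrow> {u, v} \<in> E)"

definition max_clique :: "'a set \<Rightarrow> 'a set set \<Rightarrow> 'a set \<Rightarrow> bool" where
  "max_clique V E C \<longleftrightarrow> is_clique V E C \<and> (\<forall>D. is_clique V E D \<and> C \<subseteq> D \<longrightarrow> D = C)"

text \<open>A P-node carries a vertex set and an ordered list of (nonempty) child subtrees.
  A Q-node carries the ordered list of its positions; position i carries the section
  S_i and an optional child subtree T_i (None = empty subtree).\<close>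

datatype 'a mpq = PN "'a set" "'a mpq list" | QN "('a set \<times> 'a mpq option) list"

text \<open>Nodes are addressed by index lists from the root (plane tree addresses).
  at_addr T p n: the node at address p of T is (the subtree rooted at) n.\<close>

inductive at_addr :: "'a mpq \<Rightarrow> nat list \<Rightarrow> 'a mpq \<Rightarrow> bool" where
  root: "at_addr t [] t"
| pchild: "i < length cs \<Longrightarrow> at_addr (cs ! i) p n \<Longrightarrow> at_addr (PN S cs) (i # p) n"
| qchild: "i < length ss \<Longrightarrow> snd (ss ! i) = Some c \<Longrightarrow> at_addr c p n \<Longrightarrow> at_addr (QN ss) (i # p) n"

fun here :: "'a \<Rightarrow> 'a mpq \<Rightarrow> bool" where
  "here v (PN S cs) \<longleftrightarrow> v \<in> S"
| "here v (QN ss) \<longleftrightarrow> (\<exists>i < length ss. v \<in> fst (ss ! i))"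

definition tverts :: "'a mpq \<Rightarrow> 'a set" where
  "tverts t = {v. \<exists>p n. at_addr t p n \<and> here v n}"

definition opt_verts :: "'a mpq option \<Rightarrow> 'a set" where
  "opt_verts co = (case co of None \<Rightarrow> {} | Some c \<Rightarrow> tverts c)"

text \<open>The maximal cliques of descending paths, read left to right.\<close>

primrec cseq :: "'a mpq \<Rightarrow> 'a set list" where
  "cseq (PN S cs) = (if cs = [] then [S] else concat (map (map ((\<union>) S)) (map cseq cs)))"
| "cseq (QN ss) = concat (map (\<lambda>(Si, co). case co of None \<Rightarrow> [Si] | Some l \<Rightarrow> map ((\<union>) Si) l)
                              (map (map_prod id (map_option cseq)) ss))"

inductive tequiv :: "'a mpq \<Rightarrow> 'a mpq \<Rightarrow> bool" where
  pperm: "length ds = length cs \<Longrightarrow> bij_betw \<pi> {..<length cs} {..<length cs} \<Longrightarrow>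
          (\<forall>i < length cs. tequiv (cs ! i) (ds ! \<pi> i)) \<Longrightarrow> tequiv (PN S cs) (PN S ds)"
| qsame: "length ts = length ss \<Longrightarrow>
          (\<forall>i < length ss. fst (ts ! i) = fst (ss ! i) \<and>
             ((snd (ss ! i) = None \<and> snd (ts ! i) = None) \<or>
              (\<exists>a b. snd (ss ! i) = Some a \<and> snd (ts ! i) = Some b \<and> tequiv a b))) \<Longrightarrow>
          tequiv (QN ss) (QN ts)"
| qrev: "length ts = length ss \<Longrightarrow>
          (\<forall>i < length ss. fst (ts ! i) = fst (ss ! i) \<and>
             ((snd (ss ! i) = None \<and> snd (ts ! i) = None) \<or>
              (\<exists>a b. snd (ss ! i) = Some a \<and> snd (ts ! i) = Some b \<and> tequiv a b))) \<Longrightarrow>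
          tequiv (QN ss) (QN (rev ts))"

definition consecutive :: "'a set list \<Rightarrow> bool" where
  "consecutive L \<longleftrightarrow> (\<forall>v i j k. i \<le> j \<and> j \<le> k \<and> k < length L \<and> v \<in> L ! i \<and> v \<in> L ! k \<longrightarrow> v \<in> L ! j)"

text \<open>Local structural conditions at a node: (k >= 3) and (a)-(f) for Q-nodes
  (with 0-based positions 0..k-1), (g) and (h) for P-nodes. Condition (i) is built
  into the datatype (children of P-nodes are trees, hence nonempty).\<close>

fun node_ok :: "'a mpq \<Rightarrow> bool" where
  "node_ok (PN S cs) \<longleftrightarrow>
     (S = {} \<longrightarrow> (\<forall>c\<in>set cs. \<forall>ds. c \<noteq> PN {} ds)) \<and>
     \<not> (\<exists>T ds. cs = [PN T ds])"
| "node_ok (QN ss) \<longleftrightarrow>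
     (let k = length ss; S = (\<lambda>i. fst (ss ! i)); W = (\<lambda>i. opt_verts (snd (ss ! i))) in
      k \<ge> 3 \<and>
      W 0 \<noteq> {} \<and> W (k - 1) \<noteq> {} \<and>
      S 0 \<subseteq> S 1 \<and> S (k - 1) \<subseteq> S (k - 2) \<and>
      (\<forall>i. 1 \<le> i \<and> i < k \<longrightarrow> S (i - 1) \<inter> S i \<noteq> {}) \<and>
      (\<forall>i. 1 \<le> i \<and> i < k \<longrightarrow> S (i - 1) \<noteq> S i) \<and>
      (\<forall>i. 1 \<le> i \<and> i \<le> k - 2 \<longrightarrow>
           (S i \<inter> S (i + 1)) - S 0 \<noteq> {} \<and> (S (i - 1) \<inter> S i) - S (k - 1) \<noteq> {}) \<and>
      (\<forall>i. 1 \<le> i \<and> i < k \<longrightarrow>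
           (S (i - 1) \<union> W (i - 1)) - S i \<noteq> {} \<and> (S i \<union> W i) - S (i - 1) \<noteq> {}))"

definition mpq_tree_of :: "'a set \<Rightarrow> 'a set set \<Rightarrow> 'a mpq \<Rightarrow> bool" where
  "mpq_tree_of V E T \<longleftrightarrow>
     \<comment> \<open>vertex assignment: every vertex assigned to exactly one node, nothing else occurs\<close>
     (\<forall>v\<in>V. \<exists>!p. \<exists>n. at_addr T p n \<and> here v n) \<and>
     (\<forall>p n v. at_addr T p n \<and> here v n \<longrightarrow> v \<in> V) \<and>
     \<comment> \<open>at a Q-node a vertex lies exactly in sections l..r with l < r\<close>
     (\<forall>p ss v. at_addr T p (QN ss) \<and> here v (QN ss) \<longrightarrow>
        (\<exists>l r. l < r \<and> r < length ss \<and> (\<forall>i < length ss. v \<in> fst (ss ! i) \<longleftrightarrow> l \<le> i \<and> i \<le> r))) \<and>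
     \<comment> \<open>maximal cliques in bijection with descending paths\<close>
     distinct (cseq T) \<and> set (cseq T) = {C. max_clique V E C} \<and>
     \<comment> \<open>tree transformations give exactly the consecutive clique orderings\<close>
     (\<forall>L. (distinct L \<and> set L = {C. max_clique V E C} \<and> consecutive L) \<longleftrightarrow>
          (\<exists>T'. tequiv T T' \<and> cseq T' = L)) \<and>
     \<comment> \<open>local conditions (a)-(i)\<close>
     (\<forall>p n. at_addr T p n \<longrightarrow> node_ok n)"

definition node :: "'a mpq \<Rightarrow> 'a \<Rightarrow> nat list" where
  "node T v = (THE p. \<exists>n. at_addr T p n \<and> here v n)"

text \<open>x is over y: node(x) is the lowest common ancestor of node(x) and node(y),
  i.e. node(x) is an ancestor (address prefix) of node(y).\<close>

definition over :: "'a mpq \<Rightarrow> 'a \<Rightarrow> 'a \<Rightarrow> bool" where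
  "over T x y \<longleftrightarrow> (\<exists>s. node T y = node T x @ s)"

text \<open>The <x,y>-tree-path n_1..n_t consists of the nodes at addresses
  take m (node y) for length (node x) <= m <= length (node y). It goes through a
  central section if some inner node n_i (1 < i < t) is a Q-node with k positions
  and the next node lies in the subtree of a position a with 0 < a < k-1 (0-based).\<close>

definition through_central :: "'a mpq \<Rightarrow> 'a \<Rightarrow> 'a \<Rightarrow> bool" where
  "through_central T x y \<longleftrightarrow>
     (\<exists>m ss. length (node T x) < m \<and> m < length (node T y) \<and>
        at_addr T (take m (node T y)) (QN ss) \<and>
        0 < node T y ! m \<and> node T y ! m < length ss - 1)"

definition almost_rotable :: "'a mpq \<Rightarrow> 'a \<Rightarrow> 'a \<Rightarrow> bool" where
  "almost_rotable T x y \<longleftrightarrow> \<not> through_central T x y \<and> (\<exists>S. at_addr T (node T y) (PN S []))"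

end

theory Submission
  imports Defs
begin


lemma distinct_concat_nth:
  "distinct (concat xs) \<Longrightarrow> i < length xs \<Longrightarrow> j < length xs \<Longrightarrow> i \<noteq> j \<Longrightarrow> set (xs!i) \<inter> set (xs!j) = {}"
proof (induction xs arbitrary: i j)
  case Nil then show ?case by simp
next
  case (Cons a xs)
  show ?case
  proof (cases i)
    case 0
    then obtain j' where "j = Suc j'" using Cons by (cases j) auto
    have "set (xs!j') \<subseteq> set (concat xs)" using Cons \<open>j = Suc j'\<close> by auto
    then show ?thesis using Cons 0 \<open>j = Suc j'\<close> by auto
  next
    case (Suc i')
    show ?thesis
    proof (cases j)
      case 0
      have "set (xs!i') \<subseteq> set (concat xs)" using Cons \<open>i = Suc i'\<close> by auto
      then show ?thesis using Cons 0 \<open>i = Suc i'\<close> by auto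
    next
      case (Suc j') then show ?thesis using Cons \<open>i = Suc i'\<close> by auto
    qed
  qed
qed

lemma distinct_concat_each: "distinct (concat xs) \<Longrightarrow> i < length xs \<Longrightarrow> distinct (xs!i)"
  by (simp add: distinct_concat_iff)

lemma set_concat_map_nth: "set (concat (map g xs)) = (\<Union>i<length xs. set (g (xs!i)))"
  by (auto simp: set_conv_nth[of xs])

inductive croute :: "'a mpq \<Rightarrow> nat list \<Rightarrow> 'a set \<Rightarrow> bool" where
  cleaf: "croute (PN S []) [] S"
| cp: "i < length cs \<Longrightarrow> croute (cs!i) r C \<Longrightarrow> croute (PN S cs) (i#r) (S \<union> C)"
| cqn: "i < length ss \<Longrightarrow> snd (ss!i) = None \<Longrightarrow> croute (QN ss) [i] (fst (ss!i))"
| cqs: "i < length ss \<Longrightarrow> snd (ss!i) = Some c \<Longrightarrow> croute c r C \<Longrightarrow> croute (QN ss) (i#r) (fst (ss!i) \<union> C)"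

lemma set_cseq: "set (cseq t) = {C. \<exists>r. croute t r C}"
proof (induction t)
  case (PN S cs)
  show ?case
  proof (cases "cs = []")
    case True then show ?thesis
      by (auto intro: croute.intros elim: croute.cases)
  next
    case False
    have "set (cseq (PN S cs)) = (\<Union>c\<in>set cs. (\<union>) S ` set (cseq c))" using False by auto
    also have "\<dots> = {C. \<exists>r. croute (PN S cs) r C}"
    proof (rule set_eqI, rule iffI)
      fix C assume "C \<in> (\<Union>c\<in>set cs. (\<union>) S ` set (cseq c))"
      then obtain c D where "c \<in> set cs" "D \<in> set (cseq c)" "C = S \<union> D"
        by auto
      then obtain i where "i < length cs" "c = cs!i" by (auto simp: in_set_conv_nth)
      then show "C \<in> {C. \<exists>r. croute (PN S cs) r C}" using PN[of "cs!i"] \<open>D \<in> set (cseq c)\<close> \<open>C = S \<union> D\<close>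
        by (auto intro: croute.intros)
    next
      fix C assume "C \<in> {C. \<exists>r. croute (PN S cs) r C}"
      then obtain r where "croute (PN S cs) r C" by auto
      then show "C \<in> (\<Union>c\<in>set cs. (\<union>) S ` set (cseq c))" using False PN
      proof (cases rule: croute.cases)
        case (cp i r' C')
        then have "cs!i \<in> set cs" by simp
        then show ?thesis using cp PN by blast
      qed auto
    qed
    finally show ?thesis .
  qed
next
  case (QN ss)
  let ?f = "\<lambda>(Si, co). case co of None \<Rightarrow> [Si] | Some l \<Rightarrow> map ((\<union>) Si) l"
  have "set (cseq (QN ss)) = (\<Union>i<length ss. set (?f (fst (ss!i), map_option cseq (snd (ss!i)))))"
  proof -
    have "map_prod id (map_option cseq) (ss!i) = (fst (ss!i), map_option cseq (snd (ss!i)))" for i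
      by (cases "ss!i") auto
    then show ?thesis by (simp only: cseq.simps map_map set_concat_map_nth comp_def)
  qed
  also have "\<dots> = {C. \<exists>r. croute (QN ss) r C}"
  proof (rule set_eqI, rule iffI)
    fix C assume "C \<in> (\<Union>i<length ss. set (?f (fst (ss!i), map_option cseq (snd (ss!i)))))"
    then obtain i where i: "i < length ss" "C \<in> set (?f (fst (ss!i), map_option cseq (snd (ss!i))))" by auto
    show "C \<in> {C. \<exists>r. croute (QN ss) r C}"
    proof (cases "snd (ss!i)")
      case None then show ?thesis using i by (auto intro: croute.intros)
    next
      case (Some c)
      then have "c \<in> set_option (snd (ss!i))" by simp
      moreover have "ss!i \<in> set ss" using i by simp
      ultimately have IH: "set (cseq c) = {C. \<exists>r. croute c r C}" using QN
        by (metis prod.collapse snds.intros)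
      then show ?thesis using i Some by (auto intro: croute.intros)
    qed
  next
    fix C assume "C \<in> {C. \<exists>r. croute (QN ss) r C}"
    then obtain r where "croute (QN ss) r C" by auto
    then show "C \<in> (\<Union>i<length ss. set (?f (fst (ss!i), map_option cseq (snd (ss!i)))))"
    proof (cases rule: croute.cases)
      case (cqn i) then show ?thesis by force
    next
      case (cqs i c r' C')
      then have "c \<in> set_option (snd (ss!i))" by simp
      moreover have "ss!i \<in> set ss" using cqs by simp
      ultimately have IH: "set (cseq c) = {C. \<exists>r. croute c r C}" using QN
        by (metis prod.collapse snds.intros)
      then show ?thesis using cqs by force
    qed
  qed
  finally show ?case .
qed

lemma at_nil[simp]: "at_addr t [] n \<longleftrightarrow> n = t"
  by (auto intro: at_addr.intros elim: at_addr.cases)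

lemma at_PN_cons[simp]: "at_addr (PN S cs) (i#p) n \<longleftrightarrow> i < length cs \<and> at_addr (cs!i) p n"
  by (auto intro: at_addr.intros elim: at_addr.cases)

lemma at_QN_cons[simp]: "at_addr (QN ss) (i#p) n \<longleftrightarrow> i < length ss \<and> (\<exists>c. snd (ss!i) = Some c \<and> at_addr c p n)"
  by (auto intro: at_addr.intros elim: at_addr.cases)

lemma at_det: "at_addr t p n \<Longrightarrow> at_addr t p n' \<Longrightarrow> n = n'"
proof (induction p arbitrary: t)
  case Nil then show ?case by simp
next
  case (Cons i p) then show ?case by (cases t) auto
qed

lemma at_append: "at_addr t p n \<Longrightarrow> at_addr n q m \<Longrightarrow> at_addr t (p@q) m"
  by (induction rule: at_addr.induct) auto

lemma at_append_D: "at_addr t (p@q) m \<Longrightarrow> \<exists>n. at_addr t p n \<and> at_addr n q m"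
proof (induction p arbitrary: t)
  case Nil then show ?case by simp
next
  case (Cons i p) then show ?case by (cases t) auto
qed



lemma croute_in_cseq: "croute t r C \<Longrightarrow> C \<in> set (cseq t)"
  using set_cseq by blast

lemma cseq_QN_nth: "k < length ss \<Longrightarrow>
  map (\<lambda>(Si, co). case co of None \<Rightarrow> [Si] | Some l \<Rightarrow> map ((\<union>) Si) l) (map (map_prod id (map_option cseq)) ss) ! k
  = (case snd (ss!k) of None \<Rightarrow> [fst (ss!k)] | Some c \<Rightarrow> map ((\<union>) (fst (ss!k))) (cseq c))"
  by (cases "ss!k") (auto split: option.splits)

lemma inj_map_distinct: "distinct (map f xs) \<Longrightarrow> a \<in> set xs \<Longrightarrow> b \<in> set xs \<Longrightarrow> f a = f b \<Longrightarrow> a = b"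
  by (metis distinct_map inj_on_eq_iff)

lemma croute_inj: "croute t r C \<Longrightarrow> croute t r' C \<Longrightarrow> distinct (cseq t) \<Longrightarrow> r = r'"
proof (induction arbitrary: r' rule: croute.induct)
  case (cleaf S) then show ?case by (auto elim: croute.cases)
next
  case (cp i cs r C S)
  from cp.prems(1) obtain j r2 C2 where j: "r' = j#r2" "j < length cs" "croute (cs!j) r2 C2" "S \<union> C = S \<union> C2"
    using cp.hyps(1) by (cases rule: croute.cases) auto
  have ne: "cs \<noteq> []" using cp.hyps(1) by auto
  let ?L = "map (map ((\<union>) S)) (map cseq cs)"
  have d: "distinct (concat ?L)" using cp.prems(2) ne by simp
  have 1: "S \<union> C \<in> set (?L!i)" using cp.hyps(1) croute_in_cseq[OF cp.hyps(2)] by simp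
  have 2: "S \<union> C \<in> set (?L!j)" using j(2,4) croute_in_cseq[OF j(3)] by simp
  have ij: "i = j"
  proof (rule ccontr)
    assume "i \<noteq> j"
    then have "set (?L!i) \<inter> set (?L!j) = {}" using distinct_concat_nth[OF d, of i j] cp.hyps(1) j(2) by simp
    then show False using 1 2 by blast
  qed
  have d2: "distinct (map ((\<union>) S) (cseq (cs!i)))" using distinct_concat_each[OF d, of i] cp.hyps(1) by simp
  have "C = C2" using inj_map_distinct[OF d2 croute_in_cseq[OF cp.hyps(2)]] croute_in_cseq[OF j(3)] j(4) ij by blast
  then have "r = r2" using cp.IH[of r2] j(3) ij d2 by (simp add: distinct_map)
  then show ?case using j ij by simp
next
  case (cqn i ss)
  let ?L = "map (\<lambda>(Si, co). case co of None \<Rightarrow> [Si] | Some l \<Rightarrow> map ((\<union>) Si) l) (map (map_prod id (map_option cseq)) ss)"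
  have d: "distinct (concat ?L)" using cqn.prems(2) by simp
  note h = cqn.hyps
  from cqn.prems(1) show ?case
  proof (cases rule: croute.cases)
    case (cqs j c r2 C2)
    have 1: "fst (ss!i) \<in> set (?L!i)" using h cseq_QN_nth[of i ss] by simp
    have 2: "fst (ss!i) \<in> set (?L!j)" using cqs cseq_QN_nth[of j ss] croute_in_cseq[OF cqs(5)] by auto
    have "i = j"
    proof (rule ccontr)
      assume "i \<noteq> j"
      then have "set (?L!i) \<inter> set (?L!j) = {}" using distinct_concat_nth[OF d, of i j] h(1) cqs(3) by simp
      then show False using 1 2 by blast
    qed
    then show ?thesis using h cqs by simp
  next
    case (cqn j)
    have 1: "fst (ss!i) \<in> set (?L!i)" using h cseq_QN_nth[of i ss] by simp
    have 2: "fst (ss!i) \<in> set (?L!j)" using cqn cseq_QN_nth[of j ss] by auto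
    have "i = j"
    proof (rule ccontr)
      assume "i \<noteq> j"
      then have "set (?L!i) \<inter> set (?L!j) = {}" using distinct_concat_nth[OF d, of i j] h(1) cqn(3) by simp
      then show False using 1 2 by blast
    qed
    then show ?thesis using cqn by simp
  qed
next
  case (cqs i ss c r C)
  let ?L = "map (\<lambda>(Si, co). case co of None \<Rightarrow> [Si] | Some l \<Rightarrow> map ((\<union>) Si) l) (map (map_prod id (map_option cseq)) ss)"
  have d: "distinct (concat ?L)" using cqs.prems(2) by simp
  have Li: "?L!i = map ((\<union>) (fst (ss!i))) (cseq c)" using cqs.hyps(1,2) cseq_QN_nth[of i ss] by simp
  have 1: "fst (ss!i) \<union> C \<in> set (?L!i)" using Li croute_in_cseq[OF cqs.hyps(3)] by simp
  note h = cqs.hyps and IH = cqs.IH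
  from cqs.prems(1) show ?case
  proof (cases rule: croute.cases)
    case (cqn j)
    have 2: "fst (ss!i) \<union> C \<in> set (?L!j)" using cqn cseq_QN_nth[of j ss] by simp
    have "i = j"
    proof (rule ccontr)
      assume "i \<noteq> j"
      then have "set (?L!i) \<inter> set (?L!j) = {}" using distinct_concat_nth[OF d, of i j] h(1) cqn(3) by simp
      then show False using 1 2 by blast
    qed
    then show ?thesis using cqn h by simp
  next
    case (cqs j c2 r2 C2)
    have 2: "fst (ss!i) \<union> C \<in> set (?L!j)" using cqs cseq_QN_nth[of j ss] croute_in_cseq[OF cqs(5)] by auto
    have ij: "i = j"
    proof (rule ccontr)
      assume "i \<noteq> j"
      then have "set (?L!i) \<inter> set (?L!j) = {}" using distinct_concat_nth[OF d, of i j] h(1) cqs(3) by simp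
      then show False using 1 2 by blast
    qed
    have d2: "distinct (map ((\<union>) (fst (ss!i))) (cseq c))" using distinct_concat_each[OF d, of i] h(1) Li by simp
    have c2: "c2 = c" using cqs h ij by simp
    have "C = C2" using inj_map_distinct[OF d2 croute_in_cseq[OF h(3)]] croute_in_cseq[OF cqs(5)] cqs ij c2 by auto
    then have "r = r2" using IH[of r2] cqs(5) c2 d2 by (simp add: distinct_map)
    then show ?thesis using cqs ij by simp
  qed
qed

definition here_at :: "'a mpq \<Rightarrow> nat \<Rightarrow> 'a \<Rightarrow> bool" where
  "here_at n j v = (case n of PN S _ \<Rightarrow> v \<in> S | QN ss \<Rightarrow> j < length ss \<and> v \<in> fst (ss!j))"

lemma here_at_here: "here_at n j v \<Longrightarrow> here v n"
  by (cases n) (auto simp: here_at_def)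

lemma ex_le_Suc: "(\<exists>m\<le>Suc k. P m) \<longleftrightarrow> P 0 \<or> (\<exists>m\<le>k. P (Suc m))"
  by (metis Suc_le_mono not0_implies_Suc zero_le)

lemma croute_mem: "croute t r C \<Longrightarrow> v \<in> C \<longleftrightarrow> (\<exists>m \<le> length r. \<exists>n. at_addr t (take m r) n \<and> here_at n (r!m) v)"
proof (induction rule: croute.induct)
  case (cleaf S) then show ?case by (simp add: here_at_def)
next
  case (cp i cs r C S)
  have "(\<exists>m \<le> length (i#r). \<exists>n. at_addr (PN S cs) (take m (i#r)) n \<and> here_at n ((i#r)!m) v)
     \<longleftrightarrow> v \<in> S \<or> (\<exists>m \<le> length r. \<exists>n. at_addr (cs!i) (take m r) n \<and> here_at n (r!m) v)"
    using cp.hyps(1) by (simp only: length_Cons ex_le_Suc) (simp add: here_at_def)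
  then show ?case using cp.IH by auto
next
  case (cqn i ss)
  have "(\<exists>m \<le> length [i]. \<exists>n. at_addr (QN ss) (take m [i]) n \<and> here_at n ([i]!m) v)
     \<longleftrightarrow> v \<in> fst (ss!i)"
    using cqn.hyps by (simp only: length_Cons list.size ex_le_Suc) (simp add: here_at_def)
  then show ?case by simp
next
  case (cqs i ss c r C)
  have "(\<exists>m \<le> length (i#r). \<exists>n. at_addr (QN ss) (take m (i#r)) n \<and> here_at n ((i#r)!m) v)
     \<longleftrightarrow> v \<in> fst (ss!i) \<or> (\<exists>m \<le> length r. \<exists>n. at_addr c (take m r) n \<and> here_at n (r!m) v)"
    using cqs.hyps(1,2) by (simp only: length_Cons ex_le_Suc) (simp add: here_at_def)
  then show ?case using cqs.IH by auto
qed

lemma croute_memK: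
  assumes "croute t r C" "at_addr t pv nv"
    and u: "\<And>p n. at_addr t p n \<Longrightarrow> here v n \<Longrightarrow> p = pv"
  shows "v \<in> C \<longleftrightarrow> (length pv \<le> length r \<and> take (length pv) r = pv \<and> here_at nv (r ! length pv) v)"
proof
  assume "v \<in> C"
  then obtain m n where m: "m \<le> length r" "at_addr t (take m r) n" "here_at n (r!m) v"
    using croute_mem[OF assms(1)] by blast
  have "take m r = pv" using u[OF m(2) here_at_here[OF m(3)]] .
  moreover then have "length pv = m" using m(1) by auto
  moreover have "n = nv" using at_det[of t pv n nv] m(2) assms(2) \<open>take m r = pv\<close> by simp
  ultimately show "length pv \<le> length r \<and> take (length pv) r = pv \<and> here_at nv (r ! length pv) v"
    using m by auto
next
  assume "length pv \<le> length r \<and> take (length pv) r = pv \<and> here_at nv (r ! length pv) v"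
  then show "v \<in> C" using croute_mem[OF assms(1)] assms(2) by metis
qed



definition nodes_ok :: "'a mpq \<Rightarrow> bool" where
  "nodes_ok t \<longleftrightarrow> (\<forall>p n. at_addr t p n \<longrightarrow> node_ok n)"

lemma nodes_ok_sub: "nodes_ok t \<Longrightarrow> at_addr t p n \<Longrightarrow> nodes_ok n"
  unfolding nodes_ok_def using at_append by blast

lemma nodes_ok_self: "nodes_ok t \<Longrightarrow> node_ok t"
  unfolding nodes_ok_def using at_nil by blast

lemma exists_route: "nodes_ok t \<Longrightarrow> \<exists>r C. croute t r C"
proof (induction t)
  case (PN S cs)
  show ?case
  proof (cases "cs = []")
    case True then show ?thesis by (auto intro: croute.intros)
  next
    case False
    then have "cs!0 \<in> set cs" by simp
    moreover have "nodes_ok (cs!0)" using nodes_ok_sub[OF PN.prems, of "[0]"] False by simp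
    ultimately obtain r C where "croute (cs!0) r C" using PN.IH by blast
    then show ?thesis using False by (auto intro: croute.intros)
  qed
next
  case (QN ss)
  have "length ss \<ge> 3" using nodes_ok_self[OF QN.prems] by (simp add: Let_def)
  then have l: "0 < length ss" by linarith
  show ?case
  proof (cases "snd (ss!0)")
    case None then show ?thesis using l by (auto intro: croute.intros)
  next
    case (Some c)
    have "nodes_ok c" using nodes_ok_sub[OF QN.prems, of "[0]"] l Some by simp
    moreover have "ss!0 \<in> set ss" using l by simp
    moreover have "Some c \<in> Basic_BNFs.snds (ss!0)" using snds.intros[of "ss!0"] Some by simp
    ultimately obtain r C where "croute c r C" using QN.IH by fastforce
    then show ?thesis using l Some by (auto intro: croute.intros)
  qed
qed

lemma route_comp: "at_addr t p n \<Longrightarrow> croute n r C \<Longrightarrow> \<exists>C'. croute t (p@r) C'"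
  by (induction rule: at_addr.induct) (auto intro: croute.intros)

lemma route_through_addr:
  assumes "nodes_ok t" "at_addr t p n"
  shows "\<exists>r C. croute t r C \<and> length p \<le> length r \<and> take (length p) r = p"
proof -
  obtain r C where "croute n r C" using exists_route[OF nodes_ok_sub[OF assms]] by blast
  then obtain C' where "croute t (p@r) C'" using route_comp[OF assms(2)] by blast
  then show ?thesis by auto
qed

lemma route_through_idx:
  assumes "nodes_ok t" "at_addr t p (QN ss)" "i < length ss"
  shows "\<exists>r C. croute t r C \<and> length p < length r \<and> take (Suc (length p)) r = p @ [i]"
proof -
  have "\<exists>r C. croute (QN ss) (i#r) C"
  proof (cases "snd (ss!i)")
    case None then show ?thesis using assms(3) by (auto intro: croute.intros)
  next
    case (Some c)
    have "at_addr t (p@[i]) c" using at_append[OF assms(2), of "[i]" c] assms(3) Some by simp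
    then obtain r C where "croute c r C" using exists_route[OF nodes_ok_sub[OF assms(1)]] by blast
    then show ?thesis using assms(3) Some by (auto intro: croute.intros)
  qed
  then obtain r C where "croute (QN ss) (i#r) C" by blast
  then obtain C' where "croute t (p@i#r) C'" using route_comp[OF assms(2)] by blast
  then show ?thesis by (intro exI[of _ "p@i#r"]) auto
qed



definition meet :: "real \<times> real \<Rightarrow> real \<times> real \<Rightarrow> bool" where
  "meet A B \<longleftrightarrow> max (fst A) (fst B) \<le> min (snd A) (snd B)"

definition side :: "real \<times> real \<Rightarrow> real \<times> real \<Rightarrow> bool" where
  "side A P \<longleftrightarrow> snd A < fst P"

definition wfi :: "real \<times> real \<Rightarrow> bool" where
  "wfi A \<longleftrightarrow> fst A \<le> snd A"

lemma meet_iff: "wfi A \<Longrightarrow> wfi B \<Longrightarrow> meet A B \<longleftrightarrow> fst A \<le> snd B \<and> fst B \<le> snd A"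
  unfolding meet_def wfi_def by auto
lemma same_side: "wfi A \<Longrightarrow> wfi B \<Longrightarrow> wfi P \<Longrightarrow> meet A B \<Longrightarrow> \<not> meet A P \<Longrightarrow> \<not> meet B P \<Longrightarrow>
  side A P \<longleftrightarrow> side B P"
  apply (simp add: meet_iff side_def) apply (simp add: wfi_def) by linarith
lemma meet_self: "wfi A \<Longrightarrow> meet A A"
  unfolding meet_def wfi_def by simp

lemma chain_side:
  assumes "\<And>i. lo \<le> i \<Longrightarrow> i < hi \<Longrightarrow> meet (f i) (f (Suc i))"
    and "\<And>i. lo \<le> i \<Longrightarrow> i \<le> hi \<Longrightarrow> wfi (f i) \<and> \<not> meet (f i) P"
    and "wfi P" "lo \<le> hi"
  shows "side (f lo) P \<longleftrightarrow> side (f hi) P"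
  using assms
proof (induction hi)
  case 0 then show ?case by simp
next
  case (Suc h)
  show ?case
  proof (cases "lo = Suc h")
    case True then show ?thesis by simp
  next
    case False
    then have "lo \<le> h" using Suc.prems by simp
    then have "side (f lo) P \<longleftrightarrow> side (f h) P" using Suc by simp
    moreover have "side (f h) P \<longleftrightarrow> side (f (Suc h)) P"
      using same_side[of "f h" "f (Suc h)" P] Suc.prems \<open>lo \<le> h\<close> by simp
    ultimately show ?thesis by simp
  qed
qed

lemma c4_int: "wfi A \<Longrightarrow> wfi B \<Longrightarrow> wfi C \<Longrightarrow> wfi D \<Longrightarrow> meet A B \<Longrightarrow> meet B C \<Longrightarrow> meet C D \<Longrightarrow> meet D A
  \<Longrightarrow> \<not> meet A C \<Longrightarrow> \<not> meet B D \<Longrightarrow> False"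
  apply (simp add: meet_iff side_def) apply (simp add: wfi_def) by linarith
lemma tri_int: "wfi A \<Longrightarrow> wfi B \<Longrightarrow> wfi C \<Longrightarrow> \<not> meet A B \<Longrightarrow> \<not> meet B C \<Longrightarrow> \<not> meet A C
  \<Longrightarrow> (side A C \<longleftrightarrow> side B C) \<Longrightarrow> (side A B \<longleftrightarrow> side C B) \<Longrightarrow> (side B A \<longleftrightarrow> side C A) \<Longrightarrow> False"
  apply (simp add: meet_iff side_def) apply (simp add: wfi_def) by linarith

lemma maxclique_ext:
  assumes "finite V" "is_clique V E C0"
  shows "\<exists>C. max_clique V E C \<and> C0 \<subseteq> C"
proof -
  let ?A = "{D. is_clique V E D \<and> C0 \<subseteq> D}"
  have "?A \<subseteq> Pow V" by (auto simp: is_clique_def)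
  then have fA: "finite ?A" using assms(1) finite_subset by blast
  have c0: "C0 \<in> ?A" using assms(2) by simp
  then have ne: "?A \<noteq> {}" by (metis empty_iff)
  obtain m where m: "m \<in> ?A" "\<forall>b\<in>?A. m \<le> b \<longrightarrow> m = b"
    using finite_has_maximal[OF fA ne] by (elim bexE) simp
  have "max_clique V E m" unfolding max_clique_def using m by blast
  then show ?thesis using m(1) by blast
qed



definition extp :: "nat list \<Rightarrow> nat list \<Rightarrow> bool" where
  "extp r q \<longleftrightarrow> length q \<le> length r \<and> take (length q) r = q"

lemma ext_trans: "extp r q \<Longrightarrow> extp q q' \<Longrightarrow> extp r q'"
proof -
  assume a: "extp r q" "extp q q'"
  have 1: "take (length q) r = q" "length q \<le> length r" using a(1) unfolding extp_def by auto
  have 2: "take (length q') q = q'" "length q' \<le> length q" using a(2) unfolding extp_def by auto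
  have "take (length q') r = take (length q') (take (length q) r)" using 2(2) by (simp add: min_def)
  then have "take (length q') r = q'" using 1(1) 2(1) by simp
  then show ?thesis unfolding extp_def using 1(2) 2(2) by simp
qed

lemma ext_app: "extp (q@s) q"
  unfolding extp_def by simp

lemma ext_take: "extp q (take k q)"
  unfolding extp_def by (simp add: min_def take_take)

lemma ext_nth: "extp r q \<Longrightarrow> i < length q \<Longrightarrow> r!i = q!i"
proof -
  assume a: "extp r q" "i < length q"
  have "take (length q) r ! i = r ! i" using a(2) by (rule nth_take)
  moreover have "take (length q) r = q" using a(1) unfolding extp_def by simp
  ultimately show ?thesis by simp
qed

lemma ext_snoc: "extp r (q@[i]) \<Longrightarrow> r ! length q = i"
  using ext_nth[of r "q@[i]" "length q"] by simp

lemma ext_len: "extp r q \<Longrightarrow> length q \<le> length r"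
  unfolding extp_def by simp

locale setting =
  fixes V :: "'a set" and E :: "'a set set" and T :: "'a mpq" and x y :: 'a and I :: "'a \<Rightarrow> real \<times> real"
  assumes sg: "simple_graph V E"
    and mt: "mpq_tree_of V E T"
    and xy: "{x, y} \<in> E"
    and ov: "over T x y"
    and nxy: "node T x \<noteq> node T y"
    and wf: "\<And>v. v \<in> V \<Longrightarrow> wfi (I v)"
    and adj: "\<And>u v. u \<in> V \<Longrightarrow> v \<in> V \<Longrightarrow> u \<noteq> v \<Longrightarrow> ({u, v} \<in> E - {{x, y}} \<longleftrightarrow> meet (I u) (I v))"
begin

lemma finV: "finite V" using sg by (simp add: simple_graph_def)

lemma edgeV: "e \<in> E \<Longrightarrow> e \<subseteq> V" using sg by (simp add: simple_graph_def)

lemma uniq: "v \<in> V \<Longrightarrow> \<exists>!p. \<exists>n. at_addr T p n \<and> here v n"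
  using mt by (simp add: mpq_tree_of_def)

lemma hereV: "at_addr T p n \<Longrightarrow> here v n \<Longrightarrow> v \<in> V"
  using mt by (simp add: mpq_tree_of_def)

lemma secint: "at_addr T p (QN ss) \<Longrightarrow> here v (QN ss) \<Longrightarrow>
   \<exists>l r. l < r \<and> r < length ss \<and> (\<forall>i < length ss. v \<in> fst (ss ! i) \<longleftrightarrow> l \<le> i \<and> i \<le> r)"
  using mt unfolding mpq_tree_of_def by blast

lemma dist: "distinct (cseq T)" using mt by (simp add: mpq_tree_of_def)

lemma cliques: "set (cseq T) = {C. max_clique V E C}" using mt by (simp add: mpq_tree_of_def)

lemma nok: "nodes_ok T" using mt by (simp add: mpq_tree_of_def nodes_ok_def)

lemma node_at: "at_addr T p n \<Longrightarrow> here v n \<Longrightarrow> node T v = p"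
proof -
  assume a: "at_addr T p n" "here v n"
  then have "v \<in> V" using hereV by blast
  then show ?thesis using the1_equality[OF uniq[OF \<open>v \<in> V\<close>]] a unfolding node_def by blast
qed

lemma node_ex: "v \<in> V \<Longrightarrow> \<exists>n. at_addr T (node T v) n \<and> here v n"
proof -
  assume "v \<in> V"
  then obtain p n where "at_addr T p n" "here v n" using uniq by blast
  then show ?thesis using node_at by blast
qed

lemma memK: "croute T r C \<Longrightarrow> at_addr T (node T v) nv \<Longrightarrow>
   v \<in> C \<longleftrightarrow> (extp r (node T v) \<and> here_at nv (r ! length (node T v)) v)"
proof -
  assume a: "croute T r C" "at_addr T (node T v) nv"
  have "\<And>p n. at_addr T p n \<Longrightarrow> here v n \<Longrightarrow> p = node T v" using node_at by metis
  from croute_memK[of T r C "node T v" nv v, OF a this] show ?thesis unfolding extp_def by simp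
qed

lemma route_clique: "croute T r C \<Longrightarrow> max_clique V E C"
  using croute_in_cseq cliques by blast

lemma route_edge: "croute T r C \<Longrightarrow> u \<in> C \<Longrightarrow> v \<in> C \<Longrightarrow> u \<noteq> v \<Longrightarrow> {u, v} \<in> E"
  using route_clique unfolding max_clique_def is_clique_def by blast

lemma route_V: "croute T r C \<Longrightarrow> C \<subseteq> V"
  using route_clique unfolding max_clique_def is_clique_def by blast

lemma edge_route: "{u, v} \<in> E \<Longrightarrow> \<exists>r C. croute T r C \<and> u \<in> C \<and> v \<in> C"
proof -
  assume e: "{u, v} \<in> E"
  have "is_clique V E {u, v}" unfolding is_clique_def using edgeV[OF e] e
    by (auto simp: insert_commute)
  then obtain C where C: "max_clique V E C" "{u, v} \<subseteq> C" using maxclique_ext[OF finV] by blast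
  then have "C \<in> {C. \<exists>r. croute T r C}" using cliques set_cseq[of T] by simp
  then show ?thesis using C by auto
qed

lemma vertex_route: "v \<in> V \<Longrightarrow> \<exists>r C. croute T r C \<and> v \<in> C"
proof -
  assume v: "v \<in> V"
  have "is_clique V E {v}" unfolding is_clique_def using v by auto
  then obtain C where C: "max_clique V E C" "{v} \<subseteq> C" using maxclique_ext[OF finV] by blast
  then have "C \<in> {C. \<exists>r. croute T r C}" using cliques set_cseq[of T] by simp
  then show ?thesis using C by auto
qed

lemma B1: "croute T r C \<Longrightarrow> u \<in> C \<Longrightarrow> v \<in> C \<Longrightarrow> {u, v} \<noteq> {x, y} \<Longrightarrow> meet (I u) (I v)"
proof -
  assume a: "croute T r C" "u \<in> C" "v \<in> C" "{u, v} \<noteq> {x, y}"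
  have uv: "u \<in> V" "v \<in> V" using route_V[OF a(1)] a by auto
  show ?thesis
  proof (cases "u = v")
    case True then show ?thesis using meet_self wf uv by simp
  next
    case False
    then have "{u, v} \<in> E" using route_edge a by blast
    then show ?thesis using adj[OF uv False] a(4) by simp
  qed
qed

lemma B2: "u \<in> V \<Longrightarrow> v \<in> V \<Longrightarrow> u \<noteq> v \<Longrightarrow> (\<And>r C. croute T r C \<Longrightarrow> u \<in> C \<Longrightarrow> v \<in> C \<Longrightarrow> False)
   \<Longrightarrow> \<not> meet (I u) (I v)"
proof
  assume a: "u \<in> V" "v \<in> V" "u \<noteq> v" "\<And>r C. croute T r C \<Longrightarrow> u \<in> C \<Longrightarrow> v \<in> C \<Longrightarrow> False"
    and m: "meet (I u) (I v)"
  have "{u, v} \<in> E" using adj[OF a(1,2,3)] m by simp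
  then obtain r C where "croute T r C" "u \<in> C" "v \<in> C" using edge_route by blast
  then show False using a(4) by blast
qed

lemma xyV: "x \<in> V" "y \<in> V" using edgeV[OF xy] by auto

lemma x_ne_y: "x \<noteq> y"
proof -
  have "card {x, y} = 2" using sg xy unfolding simple_graph_def by blast
  then show ?thesis by (cases "x = y") auto
qed

lemma B3: "\<not> meet (I x) (I y)"
  using adj[OF xyV x_ne_y] by simp

definition px where "px = node T x"
definition py where "py = node T y"

lemma py_ext: "extp py px" "length px < length py"
proof -
  obtain s where s: "py = px @ s" using ov unfolding over_def px_def py_def by blast
  then show "extp py px" using ext_app by simp
  show "length px < length py" using s nxy unfolding px_def py_def by (cases s) auto
qed

lemma factX: "croute T r C \<Longrightarrow> extp r (take (Suc (length px)) py) \<Longrightarrow> x \<in> C"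
proof -
  assume r: "croute T r C" "extp r (take (Suc (length px)) py)"
  obtain nx where nx: "at_addr T px nx" "here x nx" using node_ex[OF xyV(1)] unfolding px_def by blast
  obtain ny where ny: "at_addr T py ny" "here y ny" using node_ex[OF xyV(2)] unfolding py_def by blast
  obtain r0 C0 where r0: "croute T r0 C0" "x \<in> C0" "y \<in> C0" using edge_route[OF xy] by blast
  have k0: "extp r0 px" "here_at nx (r0 ! length px) x" using memK[OF r0(1), of x nx] nx r0 unfolding px_def by auto
  have r0y: "extp r0 py" using memK[OF r0(1), of y ny] ny r0 unfolding py_def by auto
  have e0: "r0 ! length px = py ! length px" by (rule ext_nth[OF r0y py_ext(2)])
  have "extp (take (Suc (length px)) py) px" using py_ext unfolding extp_def
    by (simp add: take_take min_def)
  then have "extp r px" using ext_trans[OF r(2)] by blast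
  moreover have "r ! length px = py ! length px"
  proof -
    have "length px < length (take (Suc (length px)) py)" using py_ext(2) by simp
    from ext_nth[OF r(2) this] show ?thesis using py_ext(2) by simp
  qed
  ultimately have "extp r px \<and> here_at nx (r ! length px) x" using k0(2) e0 by simp
  moreover have "x \<in> C \<longleftrightarrow> extp r px \<and> here_at nx (r ! length px) x"
    using memK[OF r(1), of x nx] nx(1) unfolding px_def by blast
  ultimately show ?thesis by blast
qed

end



lemma extp_refl: "extp q q" unfolding extp_def by simp

lemma extp_snoc_prefix: "extp r (q@[j]) \<Longrightarrow> extp r q"
  by (rule ext_trans[OF _ ext_app])

lemma extp_len_neq: "extp r q \<Longrightarrow> length q < length r \<Longrightarrow> extp r (q @ [r ! length q])"
proof -
  assume a: "extp r q" "length q < length r"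
  have "take (Suc (length q)) r = take (length q) r @ [r ! length q]" using a(2) by (simp add: take_Suc_conv_app_nth)
  then show ?thesis using a unfolding extp_def by simp
qed

lemma extp_cases: "extp r q1 \<Longrightarrow> extp r q2 \<Longrightarrow> length q1 \<le> length q2 \<Longrightarrow> extp q2 q1"
proof -
  assume a: "extp r q1" "extp r q2" "length q1 \<le> length q2"
  have "take (length q1) q2 = take (length q1) (take (length q2) r)" using a(2) unfolding extp_def by simp
  also have "\<dots> = take (length q1) r" using a(3) by (simp add: min_def)
  also have "\<dots> = q1" using a(1) unfolding extp_def by simp
  finally show ?thesis using a(3) unfolding extp_def by simp
qed

context setting begin

lemma memext: "croute T r C \<Longrightarrow> v \<in> C \<Longrightarrow> extp r (node T v)"
proof -
  assume a: "croute T r C" "v \<in> C"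
  then have "v \<in> V" using route_V by blast
  then obtain n where n: "at_addr T (node T v) n" "here v n" using node_ex by blast
  show ?thesis using memK[OF a(1) n(1)] a(2) by blast
qed

lemma sec_node: "at_addr T pq (QN ss) \<Longrightarrow> j < length ss \<Longrightarrow> v \<in> fst (ss!j) \<Longrightarrow> node T v = pq \<and> v \<in> V"
proof -
  assume a: "at_addr T pq (QN ss)" "j < length ss" "v \<in> fst (ss!j)"
  then have h: "here v (QN ss)" by auto
  show ?thesis using node_at[OF a(1) h] hereV[OF a(1) h] by simp
qed

lemma secmem: "at_addr T pq (QN ss) \<Longrightarrow> node T v = pq \<Longrightarrow> croute T r C \<Longrightarrow> extp r (pq@[j])
  \<Longrightarrow> (v \<in> C \<longleftrightarrow> j < length ss \<and> v \<in> fst (ss!j))"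
proof -
  assume a: "at_addr T pq (QN ss)" "node T v = pq" "croute T r C" "extp r (pq@[j])"
  have 1: "extp r pq" using extp_snoc_prefix[OF a(4)] .
  have 2: "r ! length pq = j" using ext_snoc[OF a(4)] .
  have "v \<in> C \<longleftrightarrow> extp r (node T v) \<and> here_at (QN ss) (r ! length (node T v)) v"
    using memK[OF a(3)] a(1,2) by simp
  then show ?thesis using 1 2 a(2) by (simp add: here_at_def)
qed

lemma pnmem: "at_addr T pp (PN S cs) \<Longrightarrow> node T v = pp \<Longrightarrow> here v (PN S cs) \<Longrightarrow> croute T r C \<Longrightarrow> extp r pp
  \<Longrightarrow> v \<in> C"
proof -
  assume a: "at_addr T pp (PN S cs)" "node T v = pp" "here v (PN S cs)" "croute T r C" "extp r pp"
  have "v \<in> C \<longleftrightarrow> extp r (node T v) \<and> here_at (PN S cs) (r ! length (node T v)) v"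
    using memK[OF a(4)] a(1,2) by simp
  then show ?thesis using a by (simp add: here_at_def)
qed

lemma subvert: "at_addr T pq n \<Longrightarrow> at_addr n [j] c \<Longrightarrow> v \<in> tverts c \<Longrightarrow>
  v \<in> V \<and> extp (node T v) (pq@[j])"
proof -
  assume a: "at_addr T pq n" "at_addr n [j] c" "v \<in> tverts c"
  then obtain q m where qm: "at_addr c q m" "here v m" unfolding tverts_def by blast
  have "at_addr n ([j]@q) m" using at_append[OF a(2) qm(1)] .
  then have at: "at_addr T (pq@[j]@q) m" using at_append[OF a(1)] by simp
  have "node T v = pq@[j]@q" using node_at[OF at qm(2)] .
  then show ?thesis using hereV[OF at qm(2)] by (simp add: extp_def)
qed

lemma route_idx: "at_addr T pq (QN ss) \<Longrightarrow> j < length ss \<Longrightarrow> \<exists>r C. croute T r C \<and> extp r (pq@[j])"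
  using route_through_idx[OF nok] unfolding extp_def by fastforce

lemma route_addr: "at_addr T pq n \<Longrightarrow> \<exists>r C. croute T r C \<and> extp r pq"
  using route_through_addr[OF nok] unfolding extp_def by fastforce

lemma B2': "u \<in> V \<Longrightarrow> v \<in> V \<Longrightarrow> (\<And>r C. croute T r C \<Longrightarrow> u \<in> C \<Longrightarrow> v \<in> C \<Longrightarrow> False)
   \<Longrightarrow> \<not> meet (I u) (I v)"
proof -
  assume a: "u \<in> V" "v \<in> V" "\<And>r C. croute T r C \<Longrightarrow> u \<in> C \<Longrightarrow> v \<in> C \<Longrightarrow> False"
  obtain r C where "croute T r C" "u \<in> C" using vertex_route[OF a(1)] by blast
  then have "u \<noteq> v" using a(3) by blast
  then show ?thesis using B2[OF a(1,2)] a(3) by blast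
qed

lemma B1': "croute T r C \<Longrightarrow> u \<in> C \<Longrightarrow> v \<in> C \<Longrightarrow> u \<noteq> y \<Longrightarrow> v \<noteq> y \<Longrightarrow> meet (I u) (I v)"
proof -
  assume a: "croute T r C" "u \<in> C" "v \<in> C" "u \<noteq> y" "v \<noteq> y"
  have "{u, v} \<noteq> {x, y}" using a(4,5) by (auto simp: doubleton_eq_iff)
  then show ?thesis using B1[OF a(1,2,3)] by blast
qed

lemma B1x: "croute T r C \<Longrightarrow> x \<in> C \<Longrightarrow> v \<in> C \<Longrightarrow> v \<noteq> y \<Longrightarrow> meet (I x) (I v)"
proof -
  assume a: "croute T r C" "x \<in> C" "v \<in> C" "v \<noteq> y"
  have "{x, v} \<noteq> {x, y}" using a(4) x_ne_y by (auto simp: doubleton_eq_iff)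
  then show ?thesis using B1[OF a(1,2,3)] by blast
qed

lemma B1y: "croute T r C \<Longrightarrow> y \<in> C \<Longrightarrow> v \<in> C \<Longrightarrow> v \<noteq> x \<Longrightarrow> meet (I y) (I v)"
proof -
  assume a: "croute T r C" "y \<in> C" "v \<in> C" "v \<noteq> x"
  have "{y, v} \<noteq> {x, y}" using a(4) x_ne_y by (auto simp: doubleton_eq_iff)
  then show ?thesis using B1[OF a(1,2,3)] by blast
qed

lemma factX': "croute T r C \<Longrightarrow> extp r q \<Longrightarrow> extp q (take (Suc (length px)) py) \<Longrightarrow> x \<in> C"
  by (rule factX, assumption, rule ext_trans)

lemma node_long_ne: "length px < length (node T v) \<Longrightarrow> v \<noteq> x"
  unfolding px_def by auto

end


lemma meet_sym: "meet A B \<longleftrightarrow> meet B A"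
  unfolding meet_def by (simp add: max.commute min.commute)

context setting begin

lemma xnode: "length px < length pq \<Longrightarrow> node T v = pq \<Longrightarrow> v \<noteq> x"
  using node_long_ne by simp

lemma ynode_short: "length pq < length py \<Longrightarrow> node T v = pq \<Longrightarrow> v \<noteq> y"
  unfolding py_def by auto

lemma caseC: assumes "through_central T x y" shows False
proof -
  obtain m ss where m: "length px < m" "m < length py" "at_addr T (take m py) (QN ss)" "0 < py!m" "py!m < length ss - 1"
    using assms unfolding through_central_def px_def py_def by blast
  define pq where "pq = take m py"
  define a where "a = py ! m"
  define k where "k = length ss"
  define S where "S = (\<lambda>i. fst (ss!i))"
  define W where "W = (\<lambda>i. opt_verts (snd (ss!i)))"
  have at: "at_addr T pq (QN ss)" using m(3) unfolding pq_def .
  have lpq: "length pq = m" using m(2) by (simp add: pq_def)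
  have ok: "node_ok (QN ss)" using nok at unfolding nodes_ok_def by blast
  have k3: "3 \<le> k" using ok unfolding k_def by (simp add: Let_def)
  have W0: "W 0 \<noteq> {}" using ok unfolding k_def W_def by (simp add: Let_def)
  have Wk: "W (k-1) \<noteq> {}" using ok unfolding k_def W_def by (simp add: Let_def)
  have e: "\<And>i. 1 \<le> i \<Longrightarrow> i \<le> k - 2 \<Longrightarrow> (S i \<inter> S (i + 1)) - S 0 \<noteq> {} \<and> (S (i - 1) \<inter> S i) - S (k - 1) \<noteq> {}"
    using ok unfolding k_def S_def by (simp add: Let_def)
  have ssne: "ss \<noteq> []" using k3 unfolding k_def by (cases ss) auto
  have a1: "1 \<le> a" "a \<le> k - 2" using m(4,5) unfolding a_def k_def by auto
  have ya: "extp py (pq@[a])"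
  proof -
    have "take (Suc m) py = pq @ [a]" using m(2) unfolding pq_def a_def by (simp add: take_Suc_conv_app_nth)
    then show ?thesis using ext_take[of py "Suc m"] by simp
  qed
  have pqx: "extp (pq@[j]) (take (Suc (length px)) py)" for j
  proof -
    have "take (Suc (length px)) pq = take (Suc (length px)) py" using m(1) unfolding pq_def by (simp add: min_def)
    then have "extp pq (take (Suc (length px)) py)" using ext_take[of pq "Suc (length px)"] by simp
    then show ?thesis by (rule ext_trans[OF ext_app])
  qed
  have X: "x \<in> C" if "croute T r C" "extp r (pq@[j])" for r C j
    using factX'[OF that pqx] .
  have routeY: "extp r (pq@[a])" if "croute T r C" "y \<in> C" for r C
  proof -
    have "extp r py" using memext[OF that] unfolding py_def .
    then show ?thesis by (rule ext_trans[OF _ ya])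
  qed
  obtain c0 where c0: "snd (ss!0) = Some c0" "tverts c0 \<noteq> {}" using W0 unfolding W_def opt_verts_def
    by (cases "snd (ss!0)") auto
  obtain p0 where p0: "p0 \<in> tverts c0" using c0 by blast
  have at0: "at_addr (QN ss) [0] c0" using c0 ssne by simp
  have p0V: "p0 \<in> V" and p0n: "extp (node T p0) (pq@[0])" using subvert[OF at at0 p0] by auto
  have routeP: "extp r (pq@[0])" if "croute T r C" "p0 \<in> C" for r C
    using ext_trans[OF memext[OF that] p0n] .
  obtain c1 where c1: "snd (ss!(k-1)) = Some c1" "tverts c1 \<noteq> {}" using Wk unfolding W_def opt_verts_def
    by (cases "snd (ss!(k-1))") auto
  obtain q0 where q0: "q0 \<in> tverts c1" using c1 by blast
  have at1: "at_addr (QN ss) [k-1] c1" using c1 ssne unfolding k_def by simp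
  have q0V: "q0 \<in> V" and q0n: "extp (node T q0) (pq@[k-1])" using subvert[OF at at1 q0] by auto
  have routeQ: "extp r (pq@[k-1])" if "croute T r C" "q0 \<in> C" for r C
    using ext_trans[OF memext[OF that] q0n] .
  obtain rp Cp where rp: "croute T rp Cp" "p0 \<in> Cp" using vertex_route[OF p0V] by blast
  obtain rq Cq where rq: "croute T rq Cq" "q0 \<in> Cq" using vertex_route[OF q0V] by blast
  obtain ry Cy where ry: "croute T ry Cy" "y \<in> Cy" using vertex_route[OF xyV(2)] by blast
  have rpe: "extp rp (pq@[0])" using routeP[OF rp] .
  have rqe: "extp rq (pq@[k-1])" using routeQ[OF rq] .
  have rye: "extp ry (pq@[a])" using routeY[OF ry] .
  have wp: "wfi (I p0)" and wq: "wfi (I q0)" and wy: "wfi (I y)" and wx: "wfi (I x)"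
    using wf p0V q0V xyV by auto
  have npy: "\<not> meet (I p0) (I y)"
  proof (rule B2'[OF p0V xyV(2)])
    fix r C assume H: "croute T r C" "p0 \<in> C" "y \<in> C"
    have "r ! length pq = 0" using ext_snoc[OF routeP[OF H(1,2)]] .
    moreover have "r ! length pq = a" using ext_snoc[OF routeY[OF H(1,3)]] .
    ultimately show False using a1 by simp
  qed
  have nqy: "\<not> meet (I q0) (I y)"
  proof (rule B2'[OF q0V xyV(2)])
    fix r C assume H: "croute T r C" "q0 \<in> C" "y \<in> C"
    have "r ! length pq = k - 1" using ext_snoc[OF routeQ[OF H(1,2)]] .
    moreover have "r ! length pq = a" using ext_snoc[OF routeY[OF H(1,3)]] .
    ultimately show False using a1 by simp
  qed
  have npq: "\<not> meet (I p0) (I q0)"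
  proof (rule B2'[OF p0V q0V])
    fix r C assume H: "croute T r C" "p0 \<in> C" "q0 \<in> C"
    have "r ! length pq = k - 1" using ext_snoc[OF routeQ[OF H(1,3)]] .
    moreover have "r ! length pq = 0" using ext_snoc[OF routeP[OF H(1,2)]] .
    ultimately show False using k3 by simp
  qed
  have p0y: "p0 \<noteq> y" using npy meet_self wp by blast
  have q0y: "q0 \<noteq> y" using nqy meet_self wq by blast
  have mxp: "meet (I x) (I p0)" using B1x[OF rp(1) X[OF rp(1) rpe] rp(2) p0y] .
  have mxq: "meet (I x) (I q0)" using B1x[OF rq(1) X[OF rq(1) rqe] rq(2) q0y] .
  have mid: "side (I p0) (I y) \<longleftrightarrow> side (I q0) (I y)"
    using same_side[OF wx wp wy mxp B3 npy] same_side[OF wx wq wy mxq B3 nqy] by simp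
  have secV: "node T v = pq \<and> v \<in> V \<and> v \<noteq> x \<and> v \<noteq> y" if "j < k" "v \<in> S j" for v j
  proof -
    have "node T v = pq \<and> v \<in> V" using sec_node[OF at, of j v] that unfolding k_def S_def by simp
    moreover have "v \<noteq> x" using xnode[of pq v] calculation m(1) lpq by simp
    moreover have "v \<noteq> y" using ynode_short[of pq v] calculation m(2) lpq by simp
    ultimately show ?thesis by blast
  qed
  have smem: "v \<in> C \<longleftrightarrow> v \<in> S j" if "j < k" "v \<in> S j'" "j' < k" "croute T r C" "extp r (pq@[j])" for v j j' r C
  proof -
    have nd: "node T v = pq" using secV[OF that(3,2)] by blast
    show ?thesis using secmem[OF at nd that(4,5)] that(1) unfolding k_def S_def by simp
  qed
  define d where "d = (\<lambda>i. SOME v. v \<in> (S (i - 1) \<inter> S i) - S (k - 1))"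
  have dmem: "d i \<in> S (i - 1) \<and> d i \<in> S i \<and> d i \<notin> S (k - 1)" if "1 \<le> i" "i \<le> a" for i
  proof -
    have "i \<le> k - 2" using that a1 by linarith
    then have "(S (i - 1) \<inter> S i) - S (k - 1) \<noteq> {}" using e[of i] that(1) by blast
    then obtain v where "v \<in> (S (i - 1) \<inter> S i) - S (k - 1)" by blast
    then have "d i \<in> (S (i - 1) \<inter> S i) - S (k - 1)" unfolding d_def by (rule someI)
    then show ?thesis by blast
  qed
  have dik: "i < k" if "i \<le> a" for i using that a1 k3 by simp
  have dV: "node T (d i) = pq \<and> d i \<in> V \<and> d i \<noteq> x \<and> d i \<noteq> y" if "1 \<le> i" "i \<le> a" for i
    using secV[OF dik[OF that(2)]] dmem[OF that] by blast
  have lchain: "side (I (d 1)) (I q0) \<longleftrightarrow> side (I (d a)) (I q0)"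
  proof (rule chain_side[where f = "\<lambda>i. I (d i)"])
    fix i assume i: "1 \<le> i" "i < a"
    obtain r C where r: "croute T r C" "extp r (pq@[i])" using route_idx[OF at, of i] dik[of i] i unfolding k_def by auto
    have "d i \<in> C" using smem[OF dik[of i] _ dik[of i] r] dmem[of i] i by auto
    moreover have "d (Suc i) \<in> C" using smem[OF dik[of i] _ dik[of "Suc i"] r] dmem[of "Suc i"] i by auto
    ultimately show "meet (I (d i)) (I (d (Suc i)))" using B1'[OF r(1)] dV[of i] dV[of "Suc i"] i by auto
  next
    fix i assume i: "1 \<le> i" "i \<le> a"
    have "\<not> meet (I (d i)) (I q0)"
    proof (rule B2')
      show "d i \<in> V" using dV[OF i] by blast
      show "q0 \<in> V" by (rule q0V)
      fix r C assume r: "croute T r C" "d i \<in> C" "q0 \<in> C"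
      have "d i \<in> S (k - 1)" using smem[of "k-1" "d i" i r C] r routeQ[OF r(1,3)] dmem[OF i] dik[OF i(2)] k3 by auto
      then show False using dmem[OF i] by blast
    qed
    then show "wfi (I (d i)) \<and> \<not> meet (I (d i)) (I q0)" using wf dV[OF i] by blast
  next
    show "wfi (I q0)" by (rule wq)
    show "1 \<le> a" by (rule a1(1))
  qed
  have l1: "side (I p0) (I q0) \<longleftrightarrow> side (I (d 1)) (I q0)"
  proof (rule same_side[OF wp _ wq _ npq])
    have d1: "1 \<le> (1::nat)" "1 \<le> a" using a1 by auto
    show "wfi (I (d 1))" using wf dV[OF d1] by blast
    have "d 1 \<in> Cp" using smem[of 0 "d 1" 1 rp Cp] rpe rp(1) dmem[OF d1] k3 by auto
    then show "meet (I p0) (I (d 1))" using B1'[OF rp(1) rp(2)] p0y dV[OF d1] by blast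
    show "\<not> meet (I (d 1)) (I q0)"
    proof (rule B2')
      show "d 1 \<in> V" using dV[OF d1] by blast
      show "q0 \<in> V" by (rule q0V)
      fix r C assume r: "croute T r C" "d 1 \<in> C" "q0 \<in> C"
      have "d 1 \<in> S (k - 1)" using smem[of "k-1" "d 1" 1 r C] r routeQ[OF r(1,3)] dmem[OF d1] k3 by auto
      then show False using dmem[OF d1] by blast
    qed
  qed
  have l2: "side (I (d a)) (I q0) \<longleftrightarrow> side (I y) (I q0)"
  proof -
    have da: "1 \<le> a" "a \<le> a" using a1 by auto
    have wd: "wfi (I (d a))" using wf dV[OF da] by blast
    have "d a \<in> Cy" using smem[of a "d a" a ry Cy] rye ry(1) dmem[OF da] dik[of a] by auto
    then have md: "meet (I y) (I (d a))" using B1y[OF ry(1) ry(2)] dV[OF da] by blast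
    have nd: "\<not> meet (I (d a)) (I q0)"
    proof (rule B2')
      show "d a \<in> V" using dV[OF da] by blast
      show "q0 \<in> V" by (rule q0V)
      fix r C assume r: "croute T r C" "d a \<in> C" "q0 \<in> C"
      have "d a \<in> S (k - 1)" using smem[of "k-1" "d a" a r C] r routeQ[OF r(1,3)] dmem[OF da] dik[of a] k3 by auto
      then show False using dmem[OF da] by blast
    qed
    have "\<not> meet (I y) (I q0)" using nqy meet_sym by blast
    then show ?thesis using same_side[OF wy wd wq md _ nd] by simp
  qed
  define c where "c = (\<lambda>i. SOME v. v \<in> (S i \<inter> S (i + 1)) - S 0)"
  have cmem: "c i \<in> S i \<and> c i \<in> S (i + 1) \<and> c i \<notin> S 0" if "a \<le> i" "i \<le> k - 2" for i
  proof -
    have "1 \<le> i" using that a1 by linarith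
    then have "(S i \<inter> S (i + 1)) - S 0 \<noteq> {}" using e[of i] that(2) by blast
    then obtain v where "v \<in> (S i \<inter> S (i + 1)) - S 0" by blast
    then have "c i \<in> (S i \<inter> S (i + 1)) - S 0" unfolding c_def by (rule someI)
    then show ?thesis by blast
  qed
  have cik: "i + 1 < k" if "i \<le> k - 2" for i using that k3 by simp
  have cV: "node T (c i) = pq \<and> c i \<in> V \<and> c i \<noteq> x \<and> c i \<noteq> y" if "a \<le> i" "i \<le> k - 2" for i
    using secV[of "i+1"] cik[OF that(2)] cmem[OF that] by blast
  have cnp: "\<not> meet (I (c i)) (I p0)" if i: "a \<le> i" "i \<le> k - 2" for i
  proof (rule B2')
    show "c i \<in> V" using cV[OF i] by blast
    show "p0 \<in> V" by (rule p0V)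
    fix r C assume r: "croute T r C" "c i \<in> C" "p0 \<in> C"
    have "c i \<in> S 0" using smem[of 0 "c i" "i+1" r C] r routeP[OF r(1,3)] cmem[OF i] cik[OF i(2)] k3 by auto
    then show False using cmem[OF i] by blast
  qed
  have rchain: "side (I (c a)) (I p0) \<longleftrightarrow> side (I (c (k-2))) (I p0)"
  proof (rule chain_side[where f = "\<lambda>i. I (c i)"])
    fix i assume i: "a \<le> i" "i < k - 2"
    obtain r C where r: "croute T r C" "extp r (pq@[i+1])" using route_idx[OF at, of "i+1"] cik[of i] i unfolding k_def by auto
    have "c i \<in> C" using smem[OF cik[of i] _ cik[of i] r] cmem[of i] i by auto
    moreover have "c (Suc i) \<in> C" using smem[OF cik[of i] _ cik[of i] r] cmem[of "Suc i"] i by auto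
    ultimately show "meet (I (c i)) (I (c (Suc i)))" using B1'[OF r(1)] cV[of i] cV[of "Suc i"] i by auto
  next
    fix i assume i: "a \<le> i" "i \<le> k - 2"
    show "wfi (I (c i)) \<and> \<not> meet (I (c i)) (I p0)" using wf cV[OF i] cnp[OF i] by blast
  next
    show "wfi (I p0)" by (rule wp)
    show "a \<le> k - 2" by (rule a1(2))
  qed
  have r1: "side (I y) (I p0) \<longleftrightarrow> side (I (c a)) (I p0)"
  proof -
    have ca: "a \<le> a" "a \<le> k - 2" using a1 by auto
    have wc: "wfi (I (c a))" using wf cV[OF ca] by blast
    have "c a \<in> Cy" using smem[of a "c a" "a+1" ry Cy] rye ry(1) cmem[OF ca] cik[of a] a1 by auto
    then have mc: "meet (I y) (I (c a))" using B1y[OF ry(1) ry(2)] cV[OF ca] by blast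
    have "\<not> meet (I y) (I p0)" using npy meet_sym by blast
    then show ?thesis using same_side[OF wy wc wp mc _ cnp[OF ca]] by simp
  qed
  have r2: "side (I (c (k-2))) (I p0) \<longleftrightarrow> side (I q0) (I p0)"
  proof -
    have ck: "a \<le> k - 2" "k - 2 \<le> k - 2" using a1 by auto
    have wc: "wfi (I (c (k-2)))" using wf cV[OF ck] by blast
    have kk: "k - 2 + 1 = k - 1" using k3 by simp
    have "c (k-2) \<in> Cq" using smem[of "k-1" "c (k-2)" "k-1" rq Cq] rqe rq(1) cmem[OF ck] kk k3 by auto
    then have mc: "meet (I q0) (I (c (k-2)))" using B1'[OF rq(1) rq(2)] q0y cV[OF ck] by blast
    have "\<not> meet (I q0) (I p0)" using npq meet_sym by blast
    then show ?thesis using same_side[OF wq wc wp mc _ cnp[OF ck]] by simp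
  qed
  have "\<not> meet (I q0) (I y)" by (rule nqy)
  show False
    using tri_int[OF wp wq wy npq nqy npy mid] l1 lchain l2 r1 rchain r2 by simp
qed

end


lemma extp_eq_len: "extp q p \<Longrightarrow> length p = length q \<Longrightarrow> p = q"
  unfolding extp_def by simp

context setting begin

lemma qvert:
  assumes at: "at_addr T pq (QN ss)" and j: "j < length ss"
    and v: "v \<in> fst (ss!j) \<union> opt_verts (snd (ss!j))"
  shows "v \<in> V \<and> extp (node T v) pq \<and> (\<exists>r C. croute T r C \<and> v \<in> C \<and> extp r (pq@[j])) \<and>
    (\<forall>r C. croute T r C \<longrightarrow> v \<in> C \<longrightarrow> extp r pq \<and> (r ! length pq = j \<or>
        (v \<in> fst (ss!j) \<and> node T v = pq \<and> r ! length pq < length ss \<and> v \<in> fst (ss!(r ! length pq)))))"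
proof (cases "v \<in> fst (ss!j)")
  case True
  have nv: "node T v = pq" "v \<in> V" using sec_node[OF at j True] by auto
  obtain r C where r: "croute T r C" "extp r (pq@[j])" using route_idx[OF at j] by blast
  have "v \<in> C" using secmem[OF at nv(1) r] j True by simp
  moreover have "croute T r C \<Longrightarrow> v \<in> C \<Longrightarrow> extp r pq \<and> r ! length pq < length ss \<and> v \<in> fst (ss!(r ! length pq))" for r C
    using memK[of r C v "QN ss"] at nv(1) by (simp add: here_at_def)
  ultimately show ?thesis using r nv True extp_refl by blast
next
  case False
  then obtain c where c: "snd (ss!j) = Some c" "v \<in> tverts c" using v unfolding opt_verts_def
    by (cases "snd (ss!j)") auto
  have at1: "at_addr (QN ss) [j] c" using c j by simp
  have sv: "v \<in> V" "extp (node T v) (pq@[j])" using subvert[OF at at1 c(2)] by auto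
  have rr: "extp r (pq@[j])" if "croute T r C" "v \<in> C" for r C
    using ext_trans[OF memext[OF that] sv(2)] .
  obtain r C where r: "croute T r C" "v \<in> C" using vertex_route[OF sv(1)] by blast
  show ?thesis using sv rr r extp_snoc_prefix ext_snoc by blast
qed

lemma diverge:
  assumes at: "at_addr T pp (PN S cs)" and r1: "croute T r1 C1" and r2: "croute T r2 C2"
    and e1: "extp r1 (pp@[i])" and e2: "extp r2 (pp@[j])" and v1: "v \<in> C1" and v2: "v \<notin> C2"
  shows "extp (node T v) (pp@[i])"
proof (rule ccontr)
  assume nn: "\<not> extp (node T v) (pp@[i])"
  have vV: "v \<in> V" using route_V[OF r1] v1 by blast
  obtain nv where nv: "at_addr T (node T v) nv" "here v nv" using node_ex[OF vV] by blast
  have k1: "extp r1 (node T v)" "here_at nv (r1 ! length (node T v)) v" using memK[OF r1 nv(1)] v1 by auto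
  have L: "length (node T v) \<le> length pp"
  proof (rule ccontr)
    assume "\<not> length (node T v) \<le> length pp"
    then have "length (pp@[i]) \<le> length (node T v)" by simp
    then have "extp (node T v) (pp@[i])" using extp_cases[OF e1 k1(1)] by blast
    then show False using nn by blast
  qed
  have pv: "extp pp (node T v)" using extp_cases[OF k1(1) extp_snoc_prefix[OF e1] L] .
  have r2v: "extp r2 (node T v)" using ext_trans[OF extp_snoc_prefix[OF e2] pv] .
  have "here_at nv (r2 ! length (node T v)) v"
  proof (cases "length (node T v) < length pp")
    case True
    have "r1 ! length (node T v) = pp ! length (node T v)" using ext_nth[OF extp_snoc_prefix[OF e1] True] .
    moreover have "r2 ! length (node T v) = pp ! length (node T v)" using ext_nth[OF extp_snoc_prefix[OF e2] True] .
    ultimately show ?thesis using k1(2) by simp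
  next
    case False
    then have "node T v = pp" using extp_eq_len[OF pv] L by simp
    then have "nv = PN S cs" using at_det[of T pp nv "PN S cs"] nv(1) at by simp
    then show ?thesis using k1(2) by (simp add: here_at_def)
  qed
  then have "v \<in> C2" using memK[OF r2 nv(1)] r2v by blast
  then show False using v2 by blast
qed

end


context setting begin

lemma y_here: "at_addr T py n \<Longrightarrow> here y n"
proof -
  assume a: "at_addr T py n"
  obtain n' where "at_addr T (node T y) n'" "here y n'" using node_ex[OF xyV(2)] by blast
  then show ?thesis using at_det[of T py n n'] a unfolding py_def by simp
qed

lemma y_len: "v \<in> V \<Longrightarrow> extp (node T v) (py@[j]) \<Longrightarrow> v \<noteq> x \<and> v \<noteq> y"
proof -
  assume a: "v \<in> V" "extp (node T v) (py@[j])"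
  have "length py < length (node T v)" using ext_len[OF a(2)] by simp
  then show ?thesis using node_long_ne[of v] py_ext(2) unfolding py_def by auto
qed

lemma x_in_py: "croute T r C \<Longrightarrow> extp r py \<Longrightarrow> x \<in> C"
  using factX'[OF _ _ ext_take] by blast

lemma caseB: assumes at: "at_addr T py (QN ss)" shows False
proof -
  define k where "k = length ss"
  define S where "S = (\<lambda>i. fst (ss!i))"
  define W where "W = (\<lambda>i. opt_verts (snd (ss!i)))"
  have hy: "here y (QN ss)" using y_here[OF at] .
  obtain l r where lr: "l < r" "r < k" "\<And>i. i < k \<Longrightarrow> y \<in> S i \<longleftrightarrow> l \<le> i \<and> i \<le> r"
    using secint[OF at hy] unfolding k_def S_def by blast
  have ok: "node_ok (QN ss)" using nok at unfolding nodes_ok_def by blast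
  have f: "\<And>i. 1 \<le> i \<Longrightarrow> i < k \<Longrightarrow> (S (i - 1) \<union> W (i - 1)) - S i \<noteq> {} \<and> (S i \<union> W i) - S (i - 1) \<noteq> {}"
    using ok unfolding k_def S_def W_def by (simp add: Let_def)
  obtain a where a: "a \<in> S l \<union> W l" "a \<notin> S (l+1)" using f[of "l+1"] lr by auto
  obtain b where b: "b \<in> S r \<union> W r" "b \<notin> S (r-1)" using f[of r] lr by auto
  have qa: "a \<in> V \<and> extp (node T a) py \<and> (\<exists>rr C. croute T rr C \<and> a \<in> C \<and> extp rr (py@[l])) \<and>
    (\<forall>r' C. croute T r' C \<longrightarrow> a \<in> C \<longrightarrow> extp r' py \<and> (r' ! length py = l \<or>
        (a \<in> S l \<and> node T a = py \<and> r' ! length py < k \<and> a \<in> S (r' ! length py))))"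
    using qvert[OF at, of l a] a lr unfolding k_def S_def W_def by simp
  have qb: "b \<in> V \<and> extp (node T b) py \<and> (\<exists>rr C. croute T rr C \<and> b \<in> C \<and> extp rr (py@[r])) \<and>
    (\<forall>r' C. croute T r' C \<longrightarrow> b \<in> C \<longrightarrow> extp r' py \<and> (r' ! length py = r \<or>
        (b \<in> S r \<and> node T b = py \<and> r' ! length py < k \<and> b \<in> S (r' ! length py))))"
    using qvert[OF at, of r b] b lr unfolding k_def S_def W_def by simp
  have aV: "a \<in> V" and bV: "b \<in> V" using qa qb by auto
  have abound: "r' ! length py \<le> l" if "croute T r' C" "a \<in> C" for r' C
  proof -
    have "r' ! length py = l \<or> (a \<in> S l \<and> node T a = py \<and> r' ! length py < k \<and> a \<in> S (r' ! length py))"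
      using qa that by blast
    then show ?thesis
    proof
      assume h: "a \<in> S l \<and> node T a = py \<and> r' ! length py < k \<and> a \<in> S (r' ! length py)"
      have ha: "here a (QN ss)" using h lr unfolding S_def k_def by auto
      obtain la ra where lra: "la < ra" "ra < k" "\<And>i. i < k \<Longrightarrow> a \<in> S i \<longleftrightarrow> la \<le> i \<and> i \<le> ra"
        using secint[OF at ha] unfolding k_def S_def by blast
      have "la \<le> l" "l \<le> ra" using lra(3)[of l] h lr by auto
      moreover have "\<not> (la \<le> l + 1 \<and> l + 1 \<le> ra)" using lra(3)[of "l+1"] a(2) lr by auto
      moreover have "r' ! length py \<le> ra" using lra(3)[of "r' ! length py"] h by auto
      ultimately show ?thesis by linarith
    qed simp
  qed
  have bbound: "r \<le> r' ! length py" if "croute T r' C" "b \<in> C" for r' C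
  proof -
    have "r' ! length py = r \<or> (b \<in> S r \<and> node T b = py \<and> r' ! length py < k \<and> b \<in> S (r' ! length py))"
      using qb that by blast
    then show ?thesis
    proof
      assume h: "b \<in> S r \<and> node T b = py \<and> r' ! length py < k \<and> b \<in> S (r' ! length py)"
      have hb: "here b (QN ss)" using h lr unfolding S_def k_def by auto
      obtain lb rb where lrb: "lb < rb" "rb < k" "\<And>i. i < k \<Longrightarrow> b \<in> S i \<longleftrightarrow> lb \<le> i \<and> i \<le> rb"
        using secint[OF at hb] unfolding k_def S_def by blast
      have "lb \<le> r" "r \<le> rb" using lrb(3)[of r] h lr by auto
      moreover have "\<not> (lb \<le> r - 1 \<and> r - 1 \<le> rb)" using lrb(3)[of "r-1"] b(2) lr by auto
      moreover have "lb \<le> r' ! length py" using lrb(3)[of "r' ! length py"] h by auto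
      ultimately show ?thesis using lr by linarith
    qed simp
  qed
  have nab: "\<not> meet (I a) (I b)"
  proof (rule B2'[OF aV bV])
    fix r' C assume "croute T r' C" "a \<in> C" "b \<in> C"
    then show False using abound bbound lr by fastforce
  qed
  have ay: "a \<noteq> y" using a(2) lr(1,2) lr(3)[of "l+1"] by auto
  have by': "b \<noteq> y" using b(2) lr(1,2) lr(3)[of "r-1"] by auto
  have ax: "a \<noteq> x" using qa node_long_ne[of a] py_ext(2) ext_len unfolding py_def by fastforce
  have bx: "b \<noteq> x" using qb node_long_ne[of b] py_ext(2) ext_len unfolding py_def by fastforce
  have ynode: "node T y = py" unfolding py_def ..
  obtain ra Ca where ra: "croute T ra Ca" "a \<in> Ca" "extp ra (py@[l])" using qa by blast
  obtain rb Cb where rb: "croute T rb Cb" "b \<in> Cb" "extp rb (py@[r])" using qb by blast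
  have yCa: "y \<in> Ca" using secmem[OF at ynode ra(1,3)] lr unfolding k_def S_def by simp
  have yCb: "y \<in> Cb" using secmem[OF at ynode rb(1,3)] lr unfolding k_def S_def by simp
  have xCa: "x \<in> Ca" using x_in_py[OF ra(1) extp_snoc_prefix[OF ra(3)]] .
  have xCb: "x \<in> Cb" using x_in_py[OF rb(1) extp_snoc_prefix[OF rb(3)]] .
  have m1: "meet (I x) (I a)" using B1x[OF ra(1) xCa ra(2) ay] .
  have m2: "meet (I a) (I y)" using B1y[OF ra(1) yCa ra(2) ax] meet_sym by blast
  have m3: "meet (I y) (I b)" using B1y[OF rb(1) yCb rb(2) bx] .
  have m4: "meet (I b) (I x)" using B1x[OF rb(1) xCb rb(2) by'] meet_sym by blast
  show False using c4_int[OF wf[OF xyV(1)] wf[OF aV] wf[OF xyV(2)] wf[OF bV] m1 m2 m3 m4 B3 nab] .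
qed

end


context setting begin

lemma caseA: assumes at: "at_addr T py (PN S cs)" and ne: "cs \<noteq> []" shows False
proof -
  have hy: "here y (PN S cs)" using y_here[OF at] .
  have ynode: "node T y = py" unfolding py_def ..
  have ok: "node_ok (PN S cs)" using nok at unfolding nodes_ok_def by blast
  have yin: "y \<in> C" if "croute T r C" "extp r py" for r C
    using pnmem[OF at ynode hy that] .
  have xin: "x \<in> C" if "croute T r C" "extp r py" for r C
    using x_in_py[OF that] .
  show False
  proof (cases "length cs \<ge> 2")
    case True
    have at0: "at_addr T (py@[0]) (cs!0)" using at_append[OF at, of "[0]"] True ne by simp
    have at1: "at_addr T (py@[1]) (cs!1)" using at_append[OF at, of "[1]"] True by simp
    obtain r1 C1 where r1: "croute T r1 C1" "extp r1 (py@[0])" using route_addr[OF at0] by blast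
    obtain r2 C2 where r2: "croute T r2 C2" "extp r2 (py@[1])" using route_addr[OF at1] by blast
    have "C1 \<noteq> C2"
    proof
      assume "C1 = C2"
      then have "r1 = r2" using croute_inj[OF r1(1) _ dist] r2(1) by simp
      then show False using ext_snoc[OF r1(2)] ext_snoc[OF r2(2)] by simp
    qed
    have mc1: "max_clique V E C1" and mc2: "max_clique V E C2" using route_clique r1 r2 by auto
    have "\<not> C1 \<subseteq> C2" using mc1 mc2 \<open>C1 \<noteq> C2\<close> unfolding max_clique_def by blast
    then obtain a where a: "a \<in> C1" "a \<notin> C2" by blast
    have "\<not> C2 \<subseteq> C1" using mc1 mc2 \<open>C1 \<noteq> C2\<close> unfolding max_clique_def by blast
    then obtain b where b: "b \<in> C2" "b \<notin> C1" by blast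
    have aV: "a \<in> V" and bV: "b \<in> V" using route_V r1 r2 a b by auto
    have na: "extp (node T a) (py@[0])" using diverge[OF at r1(1) r2(1) r1(2) r2(2) a] .
    have nb: "extp (node T b) (py@[1])" using diverge[OF at r2(1) r1(1) r2(2) r1(2) b] .
    have axy: "a \<noteq> x \<and> a \<noteq> y" using y_len[OF aV na] .
    have bxy: "b \<noteq> x \<and> b \<noteq> y" using y_len[OF bV nb] .
    have nab: "\<not> meet (I a) (I b)"
    proof (rule B2'[OF aV bV])
      fix r C assume H: "croute T r C" "a \<in> C" "b \<in> C"
      have "r ! length py = 0" using ext_snoc[OF ext_trans[OF memext[OF H(1,2)] na]] .
      moreover have "r ! length py = 1" using ext_snoc[OF ext_trans[OF memext[OF H(1,3)] nb]] .
      ultimately show False by simp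
    qed
    have e1: "extp r1 py" using extp_snoc_prefix[OF r1(2)] .
    have e2: "extp r2 py" using extp_snoc_prefix[OF r2(2)] .
    have m1: "meet (I x) (I a)" using B1x[OF r1(1) xin[OF r1(1) e1] a(1)] axy by blast
    have m2: "meet (I a) (I y)" using B1y[OF r1(1) yin[OF r1(1) e1] a(1)] axy meet_sym by blast
    have m3: "meet (I y) (I b)" using B1y[OF r2(1) yin[OF r2(1) e2] b(1)] bxy by blast
    have m4: "meet (I b) (I x)" using B1x[OF r2(1) xin[OF r2(1) e2] b(1)] bxy meet_sym by blast
    show False using c4_int[OF wf[OF xyV(1)] wf[OF aV] wf[OF xyV(2)] wf[OF bV] m1 m2 m3 m4 B3 nab] .
  next
    case False
    have l1: "length cs = 1" using False ne by (cases cs) (auto simp: Suc_le_eq)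
    then obtain c where c: "cs = [c]" by (cases cs) auto
    then obtain ss where css: "c = QN ss" using ok by (cases c) auto
    have atc: "at_addr T (py@[0]) (QN ss)" using at_append[OF at, of "[0]"] c css by simp
    have okc: "node_ok (QN ss)" using nok atc unfolding nodes_ok_def by blast
    have k3: "3 \<le> length ss" using okc by (simp add: Let_def)
    have W0: "opt_verts (snd (ss!0)) \<noteq> {}" using okc by (simp add: Let_def)
    have Wk: "opt_verts (snd (ss!(length ss - 1))) \<noteq> {}" using okc by (simp add: Let_def)
    let ?k = "length ss - 1"
    have ssne: "ss \<noteq> []" using k3 by (cases ss) auto
    obtain c0 where c0: "snd (ss!0) = Some c0" "tverts c0 \<noteq> {}" using W0 unfolding opt_verts_def
      by (cases "snd (ss!0)") auto
    obtain a where a: "a \<in> tverts c0" using c0 by blast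
    obtain c1 where c1: "snd (ss!?k) = Some c1" "tverts c1 \<noteq> {}" using Wk unfolding opt_verts_def
      by (cases "snd (ss!?k)") auto
    obtain b where b: "b \<in> tverts c1" using c1 by blast
    have at0: "at_addr (QN ss) [0] c0" using c0 ssne by simp
    have at1: "at_addr (QN ss) [?k] c1" using c1 ssne by simp
    have aV: "a \<in> V" and na: "extp (node T a) ((py@[0])@[0])" using subvert[OF atc at0 a] by auto
    have bV: "b \<in> V" and nb: "extp (node T b) ((py@[0])@[?k])" using subvert[OF atc at1 b] by auto
    have na': "extp (node T a) (py@[0])" using ext_trans[OF na ext_app] by simp
    have nb': "extp (node T b) (py@[0])" using ext_trans[OF nb ext_app] by simp
    have axy: "a \<noteq> x \<and> a \<noteq> y" using y_len[OF aV na'] .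
    have bxy: "b \<noteq> x \<and> b \<noteq> y" using y_len[OF bV nb'] .
    have nab: "\<not> meet (I a) (I b)"
    proof (rule B2'[OF aV bV])
      fix r C assume H: "croute T r C" "a \<in> C" "b \<in> C"
      have "r ! length (py@[0]) = 0" using ext_snoc[OF ext_trans[OF memext[OF H(1,2)] na]] .
      moreover have "r ! length (py@[0]) = ?k" using ext_snoc[OF ext_trans[OF memext[OF H(1,3)] nb]] .
      ultimately show False using k3 by simp
    qed
    obtain r1 C1 where r1: "croute T r1 C1" "a \<in> C1" using vertex_route[OF aV] by blast
    obtain r2 C2 where r2: "croute T r2 C2" "b \<in> C2" using vertex_route[OF bV] by blast
    have e1: "extp r1 py" using extp_snoc_prefix[OF ext_trans[OF memext[OF r1] na']] .
    have e2: "extp r2 py" using extp_snoc_prefix[OF ext_trans[OF memext[OF r2] nb']] .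
    have m1: "meet (I x) (I a)" using B1x[OF r1(1) xin[OF r1(1) e1] r1(2)] axy by blast
    have m2: "meet (I a) (I y)" using B1y[OF r1(1) yin[OF r1(1) e1] r1(2)] axy meet_sym by blast
    have m3: "meet (I y) (I b)" using B1y[OF r2(1) yin[OF r2(1) e2] r2(2)] bxy by blast
    have m4: "meet (I b) (I x)" using B1x[OF r2(1) xin[OF r2(1) e2] r2(2)] bxy meet_sym by blast
    show False using c4_int[OF wf[OF xyV(1)] wf[OF aV] wf[OF xyV(2)] wf[OF bV] m1 m2 m3 m4 B3 nab] .
  qed
qed

lemma final: "\<not> almost_rotable T x y \<Longrightarrow> False"
proof -
  assume nar: "\<not> almost_rotable T x y"
  show False
  proof (cases "through_central T x y")
    case True then show False using caseC by blast
  next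
    case False
    then have nl: "\<not> (\<exists>S. at_addr T py (PN S []))" using nar unfolding almost_rotable_def py_def by blast
    obtain n where n: "at_addr T py n" using node_ex[OF xyV(2)] unfolding py_def by blast
    show False
    proof (cases n)
      case (PN S cs)
      then show False using caseA[of S cs] n nl by (cases "cs = []") auto
    next
      case (QN ss)
      then show False using caseB n by blast
    qed
  qed
qed

end

theorem mainTheorem12:
  fixes V :: "'a set" and E :: "'a set set" and T :: "'a mpq" and x y :: 'a
  assumes "interval_graph V E"
    and "mpq_tree_of V E T"
    and "{x, y} \<in> E"
    and "over T x y"
    and "node T x \<noteq> node T y"
    and "\<not> almost_rotable T x y"
  shows "\<not> interval_edge V E x y"
proof
  assume ie: "interval_edge V E x y"
  then have ig: "interval_graph V (E - {{x, y}})" unfolding interval_edge_def by blast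
  then obtain I :: "'a \<Rightarrow> real \<times> real" where
    I1: "\<forall>v\<in>V. fst (I v) \<le> snd (I v)" and
    I2: "\<forall>u\<in>V. \<forall>v\<in>V. u \<noteq> v \<longrightarrow>
            ({u, v} \<in> E - {{x, y}} \<longleftrightarrow> max (fst (I u)) (fst (I v)) \<le> min (snd (I u)) (snd (I v)))"
    unfolding interval_graph_def by blast
  have sg: "simple_graph V E" using assms(1) unfolding interval_graph_def by blast
  interpret setting V E T x y I
  proof
    show "simple_graph V E" by (rule sg)
    show "mpq_tree_of V E T" by (rule assms(2))
    show "{x, y} \<in> E" by (rule assms(3))
    show "over T x y" by (rule assms(4))
    show "node T x \<noteq> node T y" by (rule assms(5))
    show "\<And>v. v \<in> V \<Longrightarrow> wfi (I v)" using I1 unfolding wfi_def by blast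
    show "\<And>u v. u \<in> V \<Longrightarrow> v \<in> V \<Longrightarrow> u \<noteq> v \<Longrightarrow> ({u, v} \<in> E - {{x, y}} \<longleftrightarrow> meet (I u) (I v))"
      using I2 unfolding meet_def by blast
  qed
  show False using final assms(6) by blast
qed

end
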